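(* Let $E,A\in\mathbb{R}^{n\times n}$ with $A$ nonsingular and let $\mathcal{C}=\mathcal{C}(E,A)$ be the consistency space of $(E,A)$. A symmetric matrix $P\in\mathbb{R}^{n\times n}$ is a Lyapunov matrix for $(E,A)$ if and only if $x^TPx>0$ for all nonzero $x\in\mathcal{C}$ and $x^T\big(PA^{-1}E+E^TA^{-T}P\big)x<0$ for all nonzero $x\in\mathcal{C}$.
   Context: For $E,A\in\mathbb{R}^{n\times n}$ with $A$ nonsingular, $(E,A)$ denotes the linear descriptor system $E\dot x=Ax$. Its index is the smallest integer $k^*\ge 0$ with $\mathrm{Im}((A^{-1}E)^{k^*+1})=\mathrm{Im}((A^{-1}E)^{k^*})$, and its consistency space is $\mathcal{C}(E,A)=\mathrm{Im}((A^{-1}E)^{k^*})$ (the set of initial states from which the system has a continuous solution). If $\mathcal{C}\neq\{0\}$, the map $A^{-1}E$ maps $\mathcal{C}$ bijectively onto itself; letting $\tilde A$ be the inverse of its restriction to $\mathcal{C}$, the system restricted to $\mathcal{C}$ is equivalent to $\dot x=\tilde Ax$, $x\in\mathcal{C}$. A symmetric matrix $P$ is a Lyapunov matrix for $(E,A)$ if the function $V(x)=x^TPx$ is positive on $\mathcal{C}\setminus\{0\}$ and its derivative along solutions, $\dot V=2x^TP\dot x$ with $\dot x=\tilde A x$, is negative at every nonzero state $x\in\mathcal{C}$. *)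

theory Defs
  imports "HOL-Analysis.Analysis"
begin

text \<open>Descriptor system E x' = A x with A nonsingular. M = A^{-1} E.\<close>

definition dae_M :: "real^'n^'n \<Rightarrow> real^'n^'n \<Rightarrow> real^'n^'n" where
  "dae_M E A = matrix_inv A ** E"

definition dae_index :: "real^'n^'n \<Rightarrow> real^'n^'n \<Rightarrow> nat" where
  "dae_index E A = (LEAST k. range (((*v) (dae_M E A)) ^^ (Suc k)) = range (((*v) (dae_M E A)) ^^ k))"

definition consistency_space :: "real^'n^'n \<Rightarrow> real^'n^'n \<Rightarrow> (real^'n) set" where
  "consistency_space E A = range (((*v) (dae_M E A)) ^^ (dae_index E A))"

definition dae_Atilde :: "real^'n^'n \<Rightarrow> real^'n^'n \<Rightarrow> real^'n \<Rightarrow> real^'n" where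
  "dae_Atilde E A x = (THE y. y \<in> consistency_space E A \<and> dae_M E A *v y = x)"

definition lyapunov_matrix :: "real^'n^'n \<Rightarrow> real^'n^'n \<Rightarrow> real^'n^'n \<Rightarrow> bool" where
  "lyapunov_matrix E A P \<longleftrightarrow> transpose P = P \<and>
     (\<forall>x \<in> consistency_space E A. x \<noteq> 0 \<longrightarrow> x \<bullet> (P *v x) > 0) \<and>
     (\<forall>x \<in> consistency_space E A. x \<noteq> 0 \<longrightarrow> 2 * (x \<bullet> (P *v dae_Atilde E A x)) < 0)"

end

theory Submission
  imports Defs
begin

lemma sym_dot:
  fixes P :: "real^'n^'n"
  assumes "transpose P = P"
  shows "u \<bullet> (P *v v) = v \<bullet> (P *v u)"
proof -
  have "u \<bullet> (P *v v) = (u v* P) \<bullet> v" by (simp add: dot_lmul_matrix)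
  also have "\<dots> = (transpose P *v u) \<bullet> v" by (simp add: vector_transpose_matrix)
  also have "\<dots> = v \<bullet> (P *v u)" using assms by (simp add: inner_commute)
  finally show ?thesis .
qed

lemma quad_form:
  fixes E A P :: "real^'n^'n"
  assumes "transpose P = P"
  shows "x \<bullet> ((P ** matrix_inv A ** E + transpose E ** transpose (matrix_inv A) ** P) *v x)
        = 2 * (x \<bullet> (P *v (dae_M E A *v x)))"
proof -
  let ?M = "dae_M E A"
  have t: "transpose E ** transpose (matrix_inv A) = transpose ?M"
    by (simp add: dae_M_def matrix_transpose_mul)
  have "x \<bullet> ((transpose E ** transpose (matrix_inv A) ** P) *v x) = x \<bullet> (transpose ?M *v (P *v x))"
    using t by (simp add: matrix_vector_mul_assoc)
  also have "\<dots> = (x v* transpose ?M) \<bullet> (P *v x)" by (rule dot_lmul_matrix[symmetric])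
  also have "\<dots> = (?M *v x) \<bullet> (P *v x)" by (simp only: vector_transpose_matrix)
  also have "\<dots> = x \<bullet> (P *v (?M *v x))" using sym_dot[OF assms, of x "?M *v x"] by (simp add: inner_commute)
  finally have 1: "x \<bullet> ((transpose E ** transpose (matrix_inv A) ** P) *v x) = x \<bullet> (P *v (?M *v x))" .
  have 2: "x \<bullet> ((P ** matrix_inv A ** E) *v x) = x \<bullet> (P *v (?M *v x))"
    by (simp add: dae_M_def matrix_vector_mul_assoc matrix_mul_assoc)
  show ?thesis using 1 2 by (simp add: matrix_vector_mult_add_rdistrib inner_add_right)
qed

lemma funpow_linear: "linear (((*v) (M::real^'n^'n)) ^^ k)"
proof (induction k)
  case 0 show ?case using linear_id unfolding id_def by simp
next
  case (Suc k)
  have "((*v) M ^^ Suc k) = (*v) M o ((*v) M ^^ k)" by simp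
  then show ?case using linear_compose[OF Suc matrix_vector_mul_linear[of M]] by (simp add: comp_def)
qed

lemma cons_props:
  fixes E A :: "real^'n^'n"
  defines "f \<equiv> (*v) (dae_M E A)"
  shows "f ` consistency_space E A = consistency_space E A"
    and "inj_on f (consistency_space E A)"
    and "subspace (consistency_space E A)"
proof -
  define R where "R k = range (f ^^ k)" for k
  have sub: "subspace (R k)" for k
    unfolding R_def f_def by (rule linear_subspace_image[OF funpow_linear subspace_UNIV])
  have RS: "R (Suc k) = f ` R k" for k
    unfolding R_def by (simp add: image_comp)
  have le: "R (Suc k) \<subseteq> R k" for k
    unfolding R_def by (auto simp: funpow_swap1)
  have ex: "\<exists>k. R (Suc k) = R k"
  proof (rule ccontr)
    assume "\<not> ?thesis"
    then have lt: "dim (R (Suc k)) < dim (R k)" for k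
      using le[of k] sub by (metis dim_psubset psubsetI span_eq_iff)
    have "dim (R k) + k \<le> dim (R 0)" for k
    proof (induction k)
      case (Suc k) then show ?case using lt[of k] by simp
    qed simp
    moreover have "dim (R 0) \<le> CARD('n)"
      by (metis dim_subset_UNIV_cart)
    ultimately show False by (metis add_leE not_less_eq_eq)
  qed
  have C: "consistency_space E A = R (dae_index E A)"
    unfolding consistency_space_def R_def f_def by simp
  have fixk: "R (Suc (dae_index E A)) = R (dae_index E A)"
    unfolding dae_index_def R_def[abs_def] f_def[symmetric]
    using ex unfolding R_def by (rule LeastI_ex)
  show img: "f ` consistency_space E A = consistency_space E A"
    using C fixk RS by simp
  show sC: "subspace (consistency_space E A)" using C sub by simp
  let ?C = "consistency_space E A"
  obtain B where B: "B \<subseteq> ?C" "independent B" "?C \<subseteq> span B" "card B = dim ?C"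
    using basis_exists by blast
  have finB: "finite B" using B(2) independent_bound_general by blast
  have spanB: "span B = ?C" using B sC by (meson span_minimal subset_antisym)
  have lin: "linear f" unfolding f_def by (rule matrix_vector_mul_linear)
  have "span (f ` B) = f ` span B" by (rule span_linear_image[OF lin])
  then have "span (f ` B) = ?C" using spanB img by simp
  then have "dim ?C \<le> card (f ` B)"
    by (metis dim_span span_card_ge_dim span_superset finB finite_imageI order_refl)
  moreover have "card (f ` B) \<le> card B" using finB card_image_le by blast
  ultimately have cfB: "card (f ` B) = card B" using B(4) by simp
  have injB: "inj_on f B" using eq_card_imp_inj_on[OF finB cfB] .
  have fBC: "f ` B \<subseteq> ?C" using B(1) img by blast
  have indep: "independent (f ` B)"
    using card_eq_dim[OF fBC] cfB B(4) finB \<open>span (f ` B) = ?C\<close> by simp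
  have "inj_on f (span B)"
    using linear_inj_on_span_iff_independent_image[OF lin indep] injB by simp
  then show "inj_on f ?C" using spanB by simp
qed

theorem lemma1:
  fixes E A P :: "real^'n^'n"
  assumes "invertible A"
    and "transpose P = P"
  shows "lyapunov_matrix E A P \<longleftrightarrow>
    (\<forall>x \<in> consistency_space E A. x \<noteq> 0 \<longrightarrow> x \<bullet> (P *v x) > 0) \<and>
    (\<forall>x \<in> consistency_space E A. x \<noteq> 0 \<longrightarrow>
       x \<bullet> ((P ** matrix_inv A ** E + transpose E ** transpose (matrix_inv A) ** P) *v x) < 0)"
proof -
  let ?C = "consistency_space E A" and ?M = "dae_M E A"
  note img = cons_props(1)[of E A] and inj = cons_props(2)[of E A] and sC = cons_props(3)[of E A]
  have at: "dae_Atilde E A x \<in> ?C \<and> ?M *v dae_Atilde E A x = x" if "x \<in> ?C" for x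
  proof -
    have "x \<in> (*v) ?M ` ?C" using img that by (simp only:)
    then obtain y where y: "y \<in> ?C" "?M *v y = x" by (rule imageE) auto
    have "\<exists>!y. y \<in> ?C \<and> ?M *v y = x"
    proof (rule ex1I)
      show "y \<in> ?C \<and> ?M *v y = x" using y by simp
    next
      fix z assume "z \<in> ?C \<and> ?M *v z = x"
      then show "z = y" using y inj_onD[OF inj, of z y] by simp
    qed
    then show ?thesis unfolding dae_Atilde_def by (rule theI')
  qed
  have M0: "?M *v 0 = 0" by simp
  have eqv: "(\<forall>x \<in> ?C. x \<noteq> 0 \<longrightarrow> 2 * (x \<bullet> (P *v dae_Atilde E A x)) < 0) \<longleftrightarrow>
             (\<forall>x \<in> ?C. x \<noteq> 0 \<longrightarrow> 2 * (x \<bullet> (P *v (?M *v x))) < 0)"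
  proof
    assume h: "\<forall>x \<in> ?C. x \<noteq> 0 \<longrightarrow> 2 * (x \<bullet> (P *v dae_Atilde E A x)) < 0"
    show "\<forall>x \<in> ?C. x \<noteq> 0 \<longrightarrow> 2 * (x \<bullet> (P *v (?M *v x))) < 0"
    proof (intro ballI impI)
      fix x assume x: "x \<in> ?C" "x \<noteq> 0"
      have Mx: "?M *v x \<in> ?C" using imageI[OF x(1), of "(*v) ?M"] img by (simp only:)
      have Mx0: "?M *v x \<noteq> 0"
        using inj_onD[OF inj, of x 0] x sC M0 subspace_0 by auto
      have ax: "dae_Atilde E A (?M *v x) = x"
        using at[OF Mx] x inj_onD[OF inj, of "dae_Atilde E A (?M *v x)" x] by simp
      then have "2 * ((?M *v x) \<bullet> (P *v x)) < 0" using h[rule_format, OF Mx Mx0] unfolding ax by simp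
      then show "2 * (x \<bullet> (P *v (?M *v x))) < 0" using sym_dot[OF assms(2), of x "?M *v x"] by simp
    qed
  next
    assume h: "\<forall>x \<in> ?C. x \<noteq> 0 \<longrightarrow> 2 * (x \<bullet> (P *v (?M *v x))) < 0"
    show "\<forall>x \<in> ?C. x \<noteq> 0 \<longrightarrow> 2 * (x \<bullet> (P *v dae_Atilde E A x)) < 0"
    proof (intro ballI impI)
      fix x assume x: "x \<in> ?C" "x \<noteq> 0"
      let ?y = "dae_Atilde E A x"
      have y: "?y \<in> ?C" "?M *v ?y = x" using at[OF x(1)] by auto
      have "?y \<noteq> 0" using y x M0 by auto
      then have "2 * (?y \<bullet> (P *v x)) < 0" using h[rule_format, OF y(1)] y(2) by simp
      then show "2 * (x \<bullet> (P *v ?y)) < 0" using sym_dot[OF assms(2), of x ?y] by simp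
    qed
  qed
  show ?thesis
    unfolding lyapunov_matrix_def quad_form[OF assms(2)] using eqv assms(2) by auto
qed

end
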